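(* In the discrete torus model with frame group $\mathbb{Z}_2\times\mathbb{Z}_2$ and the 2-dimensional calculus $\mathcal C=\{\overline{10},\overline{01}\}$ (context), the torsion-free and cotorsion-free spin connections are exactly \[A_{\overline{10}}=a\,e_1-\tfrac{s_2}{2}e_2,\qquad A_{\overline{01}}=-\tfrac{s_1}{2}e_1+b\,e_2\] for arbitrary functions $a,b$, where $s_1=\bar\partial^2\Theta_1$, $s_2=\bar\partial^1\Theta_2$. The covariant derivative is $\nabla e_1=2a\,e_1\otimes e_1-s_2\,e_2\otimes e_1$, $\nabla e_2=-s_1\,e_1\otimes e_2+2b\,e_2\otimes e_2$, and such a connection is regular if and only if $a\,\bar\partial^1b-b\,\bar\partial^2a=0$ (equivalently $aR_1b-bR_2a=0$).
   Context: Discrete torus model: $\Sigma=\mathbb{Z}_2\times\mathbb{Z}_2$, $x\to y$ iff $y-x\in\{(1,0),(0,1)\}$; diagonal zweibein $e_{1,x,x+(1,0)}=\Theta_1(x)^{-1}$, $e_{2,x,x+(0,1)}=\Theta_2(x)^{-1}$, $\Theta_a$ nowhere-vanishing with $\Theta_1R_1\Theta_2=\Theta_2R_2\Theta_1$; $R_1f(x)=f(x+(1,0))$, $R_2f(x)=f(x+(0,1))$, $\bar\partial^a=R_a-\mathrm{id}$; $e_af=R_a(f)e_a$, $\mathrm{d}f=\sum_a(\bar\partial^af)\Theta_ae_a$; two-forms $e_1\wedge e_2=-e_2\wedge e_1$, $e_a\wedge e_a=0$; $\mathrm{d}e_1=(\bar\partial^1\Theta_2)e_1\wedge e_2$, $\mathrm{d}e_2=-(\bar\partial^2\Theta_1)e_1\wedge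 e_2$. Frame group $\mathbb{Z}_2\times\mathbb{Z}_2=\{\overline{00},\overline{10},\overline{01},\overline{11}\}$ with calculus $\mathcal C=\{\overline{10},\overline{01}\}$, $f^{\overline{10}}\triangleright e_1=-2e_1$, $f^{\overline{10}}\triangleright e_2=0$, $f^{\overline{01}}\triangleright e_1=0$, $f^{\overline{01}}\triangleright e_2=-2e_2$. Spin connection: 1-forms $A_{\overline{10}},A_{\overline{01}}$. Torsion-free: $\mathrm{d}e_a+\sum_iA_i\wedge(f^i\triangleright e_a)=0$; cotorsion-free: $\mathrm{d}e_a+\sum_i(f^i\triangleright e_a)\wedge A_i=0$; regular: $A_{\overline{10}}\wedge A_{\overline{01}}+A_{\overline{01}}\wedge A_{\overline{10}}=0$. Covariant derivative $\nabla(\sum\alpha^ae_a)=\sum\mathrm{d}\alpha^a\otimes e_a-\sum_{i,a}\alpha^aA_i\otimes f^i\triangleright e_a$. *)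

theory Defs
  imports Complex_Main "HOL-Library.Numeral_Type" "HOL-Library.Function_Algebras"
begin

type_synonym point = "2 \<times> 2"
type_synonym fn = "point \<Rightarrow> real"

text \<open>Frame index a in {1,2} (for e_1, e_2) and elements of the calculus C = {10, 01}.\<close>
datatype idx = I1 | I2
datatype gen = G10 | G01

definition shift :: "idx \<Rightarrow> point" where
  "shift a = (case a of I1 \<Rightarrow> (1, 0) | I2 \<Rightarrow> (0, 1))"

definition R :: "idx \<Rightarrow> fn \<Rightarrow> fn" where
  "R a f = (\<lambda>p. f (fst p + fst (shift a), snd p + snd (shift a)))"

definition dbar :: "idx \<Rightarrow> fn \<Rightarrow> fn" where
  "dbar a f = R a f - f"

text \<open>Diagonal zweibein data Theta_a: nowhere vanishing, with the compatibility condition.\<close>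
definition zweibein :: "(idx \<Rightarrow> fn) \<Rightarrow> bool" where
  "zweibein \<Theta> \<longleftrightarrow> (\<forall>a x. \<Theta> a x \<noteq> 0) \<and>
     \<Theta> I1 * R I1 (\<Theta> I2) = \<Theta> I2 * R I2 (\<Theta> I1)"

text \<open>One-forms: sum_a alpha^a e_a with coefficient functions on the left.\<close>
type_synonym oneform = "idx \<Rightarrow> fn"
text \<open>Two-forms: f e_1 /\ e_2.\<close>
type_synonym twoform = fn
text \<open>Elements of Omega^1 (x) Omega^1: sum T_{ab} e_a (x) e_b.\<close>
type_synonym tensor = "idx \<Rightarrow> idx \<Rightarrow> fn"

definition e :: "idx \<Rightarrow> oneform" where
  "e a = (\<lambda>b. if b = a then 1 else 0)"

definition lmult1 :: "fn \<Rightarrow> oneform \<Rightarrow> oneform" where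
  "lmult1 f \<omega> = (\<lambda>c. f * \<omega> c)"

definition lmult :: "fn \<Rightarrow> tensor \<Rightarrow> tensor" where
  "lmult f T = (\<lambda>c b. f * T c b)"

text \<open>e_a /\ e_b = eps a b e_1 /\ e_2.\<close>
definition eps :: "idx \<Rightarrow> idx \<Rightarrow> real" where
  "eps a b = (if a = I1 \<and> b = I2 then 1 else if a = I2 \<and> b = I1 then -1 else 0)"

text \<open>Wedge product using e_a f = R_a(f) e_a.\<close>
definition wedge :: "oneform \<Rightarrow> oneform \<Rightarrow> twoform" where
  "wedge \<omega> \<eta> = (\<lambda>x. \<Sum>a\<in>{I1, I2}. \<Sum>b\<in>{I1, I2}. \<omega> a x * R a (\<eta> b) x * eps a b)"

text \<open>Tensor product over the function algebra, using e_c f = R_c(f) e_c.\<close>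
definition tens :: "oneform \<Rightarrow> oneform \<Rightarrow> tensor" where
  "tens \<omega> \<eta> = (\<lambda>c b. \<omega> c * R c (\<eta> b))"

definition dfun :: "(idx \<Rightarrow> fn) \<Rightarrow> fn \<Rightarrow> oneform" where
  "dfun \<Theta> f = (\<lambda>a. dbar a f * \<Theta> a)"

definition de :: "(idx \<Rightarrow> fn) \<Rightarrow> idx \<Rightarrow> twoform" where
  "de \<Theta> a = (case a of I1 \<Rightarrow> dbar I1 (\<Theta> I2) | I2 \<Rightarrow> - dbar I2 (\<Theta> I1))"

definition gdir :: "gen \<Rightarrow> idx" where
  "gdir i = (case i of G10 \<Rightarrow> I1 | G01 \<Rightarrow> I2)"

definition act :: "gen \<Rightarrow> idx \<Rightarrow> oneform" where
  "act i a = (if gdir i = a then lmult1 (-2) (e a) else 0)"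

type_synonym spin_connection = "gen \<Rightarrow> oneform"

definition torsion_free :: "(idx \<Rightarrow> fn) \<Rightarrow> spin_connection \<Rightarrow> bool" where
  "torsion_free \<Theta> A \<longleftrightarrow>
     (\<forall>a. de \<Theta> a + (\<Sum>i\<in>{G10, G01}. wedge (A i) (act i a)) = 0)"

definition cotorsion_free :: "(idx \<Rightarrow> fn) \<Rightarrow> spin_connection \<Rightarrow> bool" where
  "cotorsion_free \<Theta> A \<longleftrightarrow>
     (\<forall>a. de \<Theta> a + (\<Sum>i\<in>{G10, G01}. wedge (act i a) (A i)) = 0)"

definition regular :: "spin_connection \<Rightarrow> bool" where
  "regular A \<longleftrightarrow> wedge (A G10) (A G01) + wedge (A G01) (A G10) = 0"

definition nabla :: "(idx \<Rightarrow> fn) \<Rightarrow> spin_connection \<Rightarrow> oneform \<Rightarrow> tensor" where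
  "nabla \<Theta> A \<omega> =
     (\<Sum>a\<in>{I1, I2}. tens (dfun \<Theta> (\<omega> a)) (e a))
     - (\<Sum>i\<in>{G10, G01}. \<Sum>a\<in>{I1, I2}. lmult (\<omega> a) (tens (A i) (act i a)))"

end

theory Submission imports Defs begin
lemma two_pp[simp]: "(x::2) + 1 + 1 = x"
  proof - have "(1::2) + 1 = 0" by simp thus ?thesis by (simp add: add.assoc) qed
lemma RR[simp]: "R a (R a f) = f"
  by (cases a) (auto simp: R_def shift_def fun_eq_iff add.assoc[symmetric])
lemma wedge_eq: "wedge \<omega> \<eta> = \<omega> I1 * R I1 (\<eta> I2) - \<omega> I2 * R I2 (\<eta> I1)"
  by (simp add: wedge_def eps_def fun_eq_iff)
lemma R_lin: "R a (f + g) = R a f + R a g" "R a (f * g) = R a f * R a g" "R a (- f) = - R a f"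
  "R a (\<lambda>x. c) = (\<lambda>x. c)" "R a (f - g) = R a f - R a g" "R a (\<lambda>x. - f x / 2) = (\<lambda>x. - R a f x / 2)"
  by (auto simp: R_def fun_eq_iff)
lemma R_zero[simp]: "R a 0 = 0" by (simp add: R_def fun_eq_iff)
lemma idx_all: "(\<forall>a. P a) \<longleftrightarrow> P I1 \<and> P I2" by (metis idx.exhaust)
lemma TF_comp: "(de \<Theta> a + (\<Sum>i\<in>{G10, G01}. wedge (A i) (act i a))) x =
   (case a of I1 \<Rightarrow> dbar I1 (\<Theta> I2) x + 2 * A G10 I2 x | I2 \<Rightarrow> - dbar I2 (\<Theta> I1) x - 2 * A G01 I1 x)"
  by (cases a) (simp_all add: wedge_eq act_def gdir_def lmult1_def e_def de_def R_def)
lemma CTF_comp: "(de \<Theta> a + (\<Sum>i\<in>{G10, G01}. wedge (act i a) (A i))) x =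
   (case a of I1 \<Rightarrow> dbar I1 (\<Theta> I2) x - 2 * R I1 (A G10 I2) x | I2 \<Rightarrow> - dbar I2 (\<Theta> I1) x + 2 * R I2 (A G01 I1) x)"
  by (cases a) (simp_all add: wedge_eq act_def gdir_def lmult1_def e_def de_def)
lemma TF_iff: "torsion_free \<Theta> A \<longleftrightarrow> (\<forall>x. A G10 I2 x = - dbar I1 (\<Theta> I2) x / 2) \<and> (\<forall>x. A G01 I1 x = - dbar I2 (\<Theta> I1) x / 2)"
  unfolding torsion_free_def idx_all fun_eq_iff TF_comp zero_fun_def idx.case
  by (intro conj_cong all_cong1) linarith+
lemma CTF_iff: "cotorsion_free \<Theta> A \<longleftrightarrow> (\<forall>x. R I1 (A G10 I2) x = dbar I1 (\<Theta> I2) x / 2) \<and> (\<forall>x. R I2 (A G01 I1) x = dbar I2 (\<Theta> I1) x / 2)"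
  unfolding cotorsion_free_def idx_all fun_eq_iff CTF_comp zero_fun_def idx.case
  by (intro conj_cong all_cong1) linarith+
lemma dbar_anti: "R a (dbar a f) = - dbar a f"
  by (simp add: dbar_def R_lin)
theorem proposition4p11:
  fixes \<Theta> :: "idx \<Rightarrow> fn"
  assumes "zweibein \<Theta>"
  defines "s1 \<equiv> dbar I2 (\<Theta> I1)" and "s2 \<equiv> dbar I1 (\<Theta> I2)"
  shows "(\<forall>A. torsion_free \<Theta> A \<and> cotorsion_free \<Theta> A \<longleftrightarrow>
            (\<exists>a b. A G10 = lmult1 a (e I1) + lmult1 (\<lambda>x. - s2 x / 2) (e I2) \<and>
                   A G01 = lmult1 (\<lambda>x. - s1 x / 2) (e I1) + lmult1 b (e I2)))
       \<and> (\<forall>a b A. A G10 = lmult1 a (e I1) + lmult1 (\<lambda>x. - s2 x / 2) (e I2) \<and>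
                  A G01 = lmult1 (\<lambda>x. - s1 x / 2) (e I1) + lmult1 b (e I2) \<longrightarrow>
             nabla \<Theta> A (e I1) = lmult (2 * a) (tens (e I1) (e I1)) + lmult (- s2) (tens (e I2) (e I1))
           \<and> nabla \<Theta> A (e I2) = lmult (- s1) (tens (e I1) (e I2)) + lmult (2 * b) (tens (e I2) (e I2))
           \<and> (regular A \<longleftrightarrow> a * dbar I1 b - b * dbar I2 a = 0)
           \<and> (regular A \<longleftrightarrow> a * R I1 b - b * R I2 a = 0))"
proof -
  have s1a: "R I2 s1 = - s1" unfolding s1_def by (rule dbar_anti)
  have s2a: "R I1 s2 = - s2" unfolding s2_def by (rule dbar_anti)
  have P1: "torsion_free \<Theta> A \<and> cotorsion_free \<Theta> A \<longleftrightarrow>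
            (\<exists>a b. A G10 = lmult1 a (e I1) + lmult1 (\<lambda>x. - s2 x / 2) (e I2) \<and>
                   A G01 = lmult1 (\<lambda>x. - s1 x / 2) (e I1) + lmult1 b (e I2))" for A
  proof
    assume "torsion_free \<Theta> A \<and> cotorsion_free \<Theta> A"
    then have h1: "\<forall>x. A G10 I2 x = - s2 x / 2" and h2: "\<forall>x. A G01 I1 x = - s1 x / 2"
      unfolding TF_iff s1_def s2_def by auto
    show "\<exists>a b. A G10 = lmult1 a (e I1) + lmult1 (\<lambda>x. - s2 x / 2) (e I2) \<and>
                   A G01 = lmult1 (\<lambda>x. - s1 x / 2) (e I1) + lmult1 b (e I2)"
    proof (intro exI conjI)
      show "A G10 = lmult1 (A G10 I1) (e I1) + lmult1 (\<lambda>x. - s2 x / 2) (e I2)"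
      proof (rule ext)
        fix c show "A G10 c = (lmult1 (A G10 I1) (e I1) + lmult1 (\<lambda>x. - s2 x / 2) (e I2)) c"
          using h1 by (cases c) (auto simp: lmult1_def e_def fun_eq_iff)
      qed
      show "A G01 = lmult1 (\<lambda>x. - s1 x / 2) (e I1) + lmult1 (A G01 I2) (e I2)"
      proof (rule ext)
        fix c show "A G01 c = (lmult1 (\<lambda>x. - s1 x / 2) (e I1) + lmult1 (A G01 I2) (e I2)) c"
          using h2 by (cases c) (auto simp: lmult1_def e_def fun_eq_iff)
      qed
    qed
  next
    assume "\<exists>a b. A G10 = lmult1 a (e I1) + lmult1 (\<lambda>x. - s2 x / 2) (e I2) \<and>
                   A G01 = lmult1 (\<lambda>x. - s1 x / 2) (e I1) + lmult1 b (e I2)"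
    then obtain a b where A1: "A G10 = lmult1 a (e I1) + lmult1 (\<lambda>x. - s2 x / 2) (e I2)"
      and A2: "A G01 = lmult1 (\<lambda>x. - s1 x / 2) (e I1) + lmult1 b (e I2)" by blast
    have c1: "A G10 I2 = (\<lambda>x. - s2 x / 2)" using A1 by (simp add: lmult1_def e_def fun_eq_iff)
    have c2: "A G01 I1 = (\<lambda>x. - s1 x / 2)" using A2 by (simp add: lmult1_def e_def fun_eq_iff)
    show "torsion_free \<Theta> A \<and> cotorsion_free \<Theta> A"
      unfolding TF_iff CTF_iff c1 c2 R_lin s1a s2a
      by (simp add: s1_def s2_def)
  qed
  show ?thesis
  proof (intro conjI allI impI P1)
    fix a b A
    assume "A G10 = lmult1 a (e I1) + lmult1 (\<lambda>x. - s2 x / 2) (e I2) \<and>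
            A G01 = lmult1 (\<lambda>x. - s1 x / 2) (e I1) + lmult1 b (e I2)"
    then have A1: "A G10 = lmult1 a (e I1) + lmult1 (\<lambda>x. - s2 x / 2) (e I2)"
      and A2: "A G01 = lmult1 (\<lambda>x. - s1 x / 2) (e I1) + lmult1 b (e I2)" by blast+
    have c1: "A G10 I2 = (\<lambda>x. - s2 x / 2)" "A G10 I1 = a" using A1 by (simp_all add: lmult1_def e_def fun_eq_iff)
    have c2: "A G01 I1 = (\<lambda>x. - s1 x / 2)" "A G01 I2 = b" using A2 by (simp_all add: lmult1_def e_def fun_eq_iff)
    show "nabla \<Theta> A (e I1) = lmult (2 * a) (tens (e I1) (e I1)) + lmult (- s2) (tens (e I2) (e I1))"
    proof (intro ext)
      fix c d x show "nabla \<Theta> A (e I1) c d x = (lmult (2 * a) (tens (e I1) (e I1)) + lmult (- s2) (tens (e I2) (e I1))) c d x"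
        using c1 c2 by (cases c; cases d) (simp_all add: nabla_def tens_def dfun_def dbar_def e_def act_def gdir_def lmult_def lmult1_def R_def)
    qed
    show "nabla \<Theta> A (e I2) = lmult (- s1) (tens (e I1) (e I2)) + lmult (2 * b) (tens (e I2) (e I2))"
    proof (intro ext)
      fix c d x show "nabla \<Theta> A (e I2) c d x = (lmult (- s1) (tens (e I1) (e I2)) + lmult (2 * b) (tens (e I2) (e I2))) c d x"
        using c1 c2 by (cases c; cases d) (simp_all add: nabla_def tens_def dfun_def dbar_def e_def act_def gdir_def lmult_def lmult1_def R_def)
    qed
    have W: "wedge (A G10) (A G01) + wedge (A G01) (A G10) = a * R I1 b - b * R I2 a"
      unfolding wedge_eq c1 c2 R_lin s1a s2a by (simp add: fun_eq_iff algebra_simps)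
    show "regular A \<longleftrightarrow> a * dbar I1 b - b * dbar I2 a = 0"
      unfolding regular_def W by (simp add: dbar_def algebra_simps)
    show "regular A \<longleftrightarrow> a * R I1 b - b * R I2 a = 0"
      unfolding regular_def W ..
  qed
qed

end
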